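(* Let $q$ be a prime power, $1\le k\le n-1$, and let $\mathcal{L}$ be a set of affine $k$-spaces of $\mathrm{AG}(n,q)$ with $|\mathcal{L}|=x\left[{n\atop k}\right]_q$ such that $|\mathcal{L}\cap\mathcal{S}|=x$ for every $k$-spread $\mathcal{S}$ of $\mathrm{AG}(n,q)$. Let $\tau_A$ be an arbitrary affine subspace of $\mathrm{AG}(n,q)$ of dimension $i\ge\max\{k+1,3\}$, regarded as the affine space $\mathrm{AG}(i,q)$, and let $[\tau_A]_k$ be the set of affine $k$-spaces contained in $\tau_A$. Then, with $c=|\mathcal{L}\cap[\tau_A]_k|/\left[{i\atop k}\right]_q$, every $k$-spread $\mathcal{S}$ of $\tau_A$ satisfies $|(\mathcal{L}\cap[\tau_A]_k)\cap\mathcal{S}|=c$.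
   Context: $\mathrm{AG}(n,q)$ is $\mathrm{PG}(n,q)$ with a hyperplane $\pi_\infty$ removed; affine points are points outside $\pi_\infty$, affine $k$-spaces are $k$-dimensional projective subspaces not contained in $\pi_\infty$. A $k$-spread of an affine space is a set of its affine $k$-spaces that pairwise share no affine point and cover all its affine points. $\left[{a\atop b}\right]_q=\frac{(q^a-1)\cdots(q^{a-b+1}-1)}{(q^b-1)\cdots(q-1)}$. *)

theory Defs
  imports "HOL-Analysis.Analysis"
begin

text \<open>Model: AG(n,q) is the affine space over the vector space F^n, F a finite field
with q elements (q = CARD('a)), n = CARD('n). An affine k-space is a coset v + W of a
k-dimensional linear subspace W.\<close>

definition aff_space :: "nat \<Rightarrow> ('a::field ^ 'n) set \<Rightarrow> bool" where
  "aff_space k A \<longleftrightarrow> (\<exists>v W. vec.subspace W \<and> vec.dim W = k \<and> A = (\<lambda>w. v + w) ` W)"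

definition kspaces_in :: "nat \<Rightarrow> ('a::field ^ 'n) set \<Rightarrow> ('a ^ 'n) set set" where
  "kspaces_in k T = {A. aff_space k A \<and> A \<subseteq> T}"

definition is_spread :: "nat \<Rightarrow> ('a::field ^ 'n) set \<Rightarrow> ('a ^ 'n) set set \<Rightarrow> bool" where
  "is_spread k T S \<longleftrightarrow> S \<subseteq> kspaces_in k T
     \<and> (\<forall>A\<in>S. \<forall>B\<in>S. A \<noteq> B \<longrightarrow> A \<inter> B = {})
     \<and> \<Union>S = T"

definition qbinom :: "nat \<Rightarrow> nat \<Rightarrow> nat \<Rightarrow> real" where
  "qbinom q a b = (\<Prod>j<b. (real q ^ (a - j) - 1)) / (\<Prod>j<b. (real q ^ (j + 1) - 1))"

end

theory Submission imports Defs begin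

lemma card_span_indep:
  fixes B :: "('a::{finite,field} ^ 'n) set"
  assumes ind: "vec.independent B"
  shows "card (vec.span B) = CARD('a) ^ card B"
proof -
  have fB: "finite B" by simp
  let ?f = "\<lambda>g. \<Sum>b\<in>B. g b *s b"
  have "bij_betw ?f (PiE B (\<lambda>_. UNIV::'a set)) (vec.span B)"
  proof (rule bij_betwI')
    fix g h assume g: "g \<in> PiE B (\<lambda>_. UNIV::'a set)" and h: "h \<in> PiE B (\<lambda>_. UNIV::'a set)"
    show "(?f g = ?f h) = (g = h)"
    proof
      assume eq: "?f g = ?f h"
      have "(\<Sum>b\<in>B. (g b - h b) *s b) = 0"
        using eq by (simp add: vector_sub_rdistrib sum_subtractf)
      then have "\<And>b. b \<in> B \<Longrightarrow> g b - h b = 0"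
        using vec.independentD[OF ind fB order_refl, of "\<lambda>b. g b - h b"] by blast
      then show "g = h" using g h by (intro PiE_ext) auto
    qed simp
  next
    fix g assume "g \<in> PiE B (\<lambda>_. UNIV::'a set)"
    show "?f g \<in> vec.span B"
      by (intro vec.span_sum vec.span_scale vec.span_base)
  next
    fix y assume "y \<in> vec.span B"
    then obtain u where u: "y = (\<Sum>v\<in>B. u v *s v)" using vec.span_finite[OF fB] by auto
    show "\<exists>g \<in> PiE B (\<lambda>_. UNIV::'a set). y = ?f g"
      by (rule bexI[of _ "restrict u B"]) (auto simp: u)
  qed
  then have "card (vec.span B) = card (PiE B (\<lambda>_. (UNIV::'a set)))"
    by (simp add: bij_betw_same_card)
  also have "\<dots> = CARD('a) ^ card B" by (simp add: card_PiE)
  finally show ?thesis .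
qed

lemma card_subspace:
  fixes U :: "('a::{finite,field} ^ 'n) set"
  assumes "vec.subspace U"
  shows "card U = CARD('a) ^ vec.dim U"
proof -
  obtain B where B: "B \<subseteq> U" "vec.independent B" "U \<subseteq> vec.span B" "card B = vec.dim U"
    by (rule vec.basis_exists)
  have "vec.span B = U" using B assms by (simp add: vec.span_subspace)
  then show ?thesis using card_span_indep[OF B(2)] B(4) by simp
qed


definition ilists :: "('a::field ^ 'n) set \<Rightarrow> nat \<Rightarrow> ('a ^ 'n) list set" where
  "ilists W j = {xs. length xs = j \<and> distinct xs \<and> vec.independent (set xs) \<and> set xs \<subseteq> W}"

lemma ilists_finite: "finite (ilists (W::('a::{finite,field} ^ 'n) set) j)"
proof -
  have "ilists W j \<subseteq> {xs. set xs \<subseteq> UNIV \<and> length xs = j}" by (auto simp: ilists_def)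
  moreover have "finite {xs. set xs \<subseteq> (UNIV::('a ^ 'n) set) \<and> length xs = j}"
    by (rule finite_lists_length_eq) simp
  ultimately show ?thesis by (rule finite_subset)
qed

lemma ilists_Suc:
  "ilists W (Suc j) = (\<lambda>(xs,v). v # xs) ` (SIGMA xs:ilists W j. W - vec.span (set xs))"
proof safe
  fix ys assume "ys \<in> ilists W (Suc j)"
  then obtain v xs where ys: "ys = v # xs" and "length xs = j" "distinct (v#xs)"
     "vec.independent (insert v (set xs))" "insert v (set xs) \<subseteq> W"
    by (cases ys) (auto simp: ilists_def)
  then show "ys \<in> (\<lambda>(xs,v). v # xs) ` (SIGMA xs:ilists W j. W - vec.span (set xs))"
    by (auto simp: ilists_def vec.independent_insert intro!: image_eqI[of _ _ "(xs,v)"]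
        split: if_splits)
next
  fix v xs assume "xs \<in> ilists W j" "v \<in> W" "v \<notin> vec.span (set xs)"
  then show "v # xs \<in> ilists W (Suc j)"
    by (auto simp: ilists_def vec.independent_insert vec.span_base)
qed

lemma card_ilists:
  fixes W :: "('a::{finite,field} ^ 'n) set"
  assumes W: "vec.subspace W"
  shows "card (ilists W j) = (\<Prod>l<j. CARD('a) ^ vec.dim W - CARD('a) ^ l)"
proof (induction j)
  case 0
  have "ilists W 0 = {[]}" by (auto simp: ilists_def vec.independent_empty)
  then show ?case by simp
next
  case (Suc j)
  have inj: "inj_on (\<lambda>(xs,v). v # xs) (SIGMA xs:ilists W j. W - vec.span (set xs))"
    by (auto simp: inj_on_def)
  have each: "card (W - vec.span (set xs)) = CARD('a) ^ vec.dim W - CARD('a) ^ j"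
    if xs: "xs \<in> ilists W j" for xs
  proof -
    have sub: "vec.span (set xs) \<subseteq> W" using xs W vec.span_minimal[of "set xs" W] by (auto simp: ilists_def)
    have "card (vec.span (set xs)) = CARD('a) ^ j"
      using xs card_span_indep[of "set xs"] by (auto simp: ilists_def distinct_card)
    then show ?thesis using sub card_subspace[OF W] by (simp add: card_Diff_subset)
  qed
  have "card (ilists W (Suc j)) = card (SIGMA xs:ilists W j. W - vec.span (set xs))"
    unfolding ilists_Suc by (rule card_image[OF inj])
  also have "\<dots> = (\<Sum>xs\<in>ilists W j. card (W - vec.span (set xs)))"
    by (rule card_SigmaI) (auto simp: ilists_finite)
  also have "\<dots> = card (ilists W j) * (CARD('a) ^ vec.dim W - CARD('a) ^ j)"
    using each by simp
  finally show ?case using Suc.IH by (simp add: mult.commute)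
qed


definition grass :: "('a::field ^ 'n) set \<Rightarrow> nat \<Rightarrow> ('a ^ 'n) set set" where
  "grass W k = {U. vec.subspace U \<and> vec.dim U = k \<and> U \<subseteq> W}"

lemma card_ge2: "2 \<le> CARD('a::{finite,field})"
proof -
  have "card {0::'a, 1} = 2" by simp
  moreover have "card {0::'a, 1} \<le> CARD('a)" by (rule card_mono) auto
  ultimately show ?thesis by simp
qed

lemma span_eq_of_card:
  fixes U :: "('a::{finite,field} ^ 'n) set"
  assumes "vec.subspace U" "vec.dim U = k" "xs \<in> ilists U k"
  shows "vec.span (set xs) = U"
proof -
  have ind: "vec.independent (set xs)" and sub: "set xs \<subseteq> U" and c: "card (set xs) = k"
    using assms(3) by (auto simp: ilists_def distinct_card)
  have "U \<subseteq> vec.span (set xs)"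
    using vec.card_eq_dim[OF sub] c assms(2) ind by simp
  moreover have "vec.span (set xs) \<subseteq> U" using vec.span_minimal[OF sub assms(1)] .
  ultimately show ?thesis by blast
qed

lemma card_grass_mult:
  fixes W :: "('a::{finite,field} ^ 'n) set"
  assumes W: "vec.subspace W"
  shows "card (ilists W k) = card (grass W k) * (\<Prod>l<k. CARD('a) ^ k - CARD('a) ^ l)"
proof -
  have eq: "ilists W k = (\<Union>U\<in>grass W k. ilists U k)"
  proof safe
    fix xs assume xs: "xs \<in> ilists W k"
    have ind: "vec.independent (set xs)" and sub: "set xs \<subseteq> W" and c: "card (set xs) = k"
      using xs by (auto simp: ilists_def distinct_card)
    have "vec.span (set xs) \<in> grass W k"
      using vec.span_minimal[OF sub W] c ind by (auto simp: grass_def vec.dim_eq_card_independent)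
    moreover have "xs \<in> ilists (vec.span (set xs)) k"
      using xs vec.span_superset[of "set xs"] by (auto simp: ilists_def)
    ultimately show "xs \<in> (\<Union>U\<in>grass W k. ilists U k)" by blast
  next
    fix U xs assume "U \<in> grass W k" "xs \<in> ilists U k"
    then show "xs \<in> ilists W k" by (auto simp: ilists_def grass_def)
  qed
  have "card (ilists W k) = (\<Sum>U\<in>grass W k. card (ilists U k))"
    unfolding eq
  proof (rule card_UN_disjoint)
    show "finite (grass W k)" by simp
    show "\<forall>i\<in>grass W k. finite (ilists i k)" by (simp add: ilists_finite)
    show "\<forall>i\<in>grass W k. \<forall>j\<in>grass W k. i \<noteq> j \<longrightarrow> ilists i k \<inter> ilists j k = {}"
    proof (intro ballI impI)
      fix U U' assume U: "U \<in> grass W k" and U': "U' \<in> grass W k" and ne: "U \<noteq> U'"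
      show "ilists U k \<inter> ilists U' k = {}"
      proof (rule ccontr)
        assume "ilists U k \<inter> ilists U' k \<noteq> {}"
        then obtain xs where "xs \<in> ilists U k" "xs \<in> ilists U' k" by blast
        then have "vec.span (set xs) = U" "vec.span (set xs) = U'"
          using span_eq_of_card U U' by (auto simp: grass_def)
        then show False using ne by simp
      qed
    qed
  qed
  also have "\<dots> = (\<Sum>U\<in>grass W k. (\<Prod>l<k. CARD('a) ^ k - CARD('a) ^ l))"
    by (rule sum.cong) (auto simp: grass_def card_ilists)
  finally show ?thesis by simp
qed

lemma prod_pos: "(\<Prod>l<k. CARD('a::{finite,field}) ^ k - CARD('a) ^ l) > 0"
proof -
  have "CARD('a) ^ l < CARD('a) ^ k" if "l < k" for l
    using card_ge2[where 'a='a] that by (intro power_strict_increasing) auto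
  then show ?thesis by (auto intro: prod_pos)
qed

lemma qbinom_alg:
  fixes q :: nat
  assumes q: "q \<ge> 2" and ki: "k \<le> i"
  shows "real (\<Prod>l<k. q ^ i - q ^ l) / real (\<Prod>l<k. q ^ k - q ^ l) = qbinom q i k"
proof -
  have h: "real (q ^ a - q ^ l) = real q ^ l * (real q ^ (a - l) - 1)" if "l < a" for a l
  proof -
    have "q ^ l \<le> q ^ a" using q that by (intro power_increasing) auto
    then have "real (q ^ a - q ^ l) = real q ^ a - real q ^ l" by (simp add: of_nat_diff)
    also have "real q ^ a = real q ^ l * real q ^ (a - l)"
      using that by (simp add: power_add[symmetric])
    finally show ?thesis by (simp add: algebra_simps)
  qed
  have n: "real (\<Prod>l<k. q ^ i - q ^ l) = (\<Prod>l<k. real q ^ l) * (\<Prod>l<k. real q ^ (i - l) - 1)"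
    using ki by (simp add: h prod.distrib[symmetric])
  have d: "real (\<Prod>l<k. q ^ k - q ^ l) = (\<Prod>l<k. real q ^ l) * (\<Prod>l<k. real q ^ (k - l) - 1)"
    by (simp add: h prod.distrib[symmetric])
  have r: "(\<Prod>l<k. real q ^ (k - l) - 1) = (\<Prod>j<k. real q ^ (j + 1) - 1)"
  proof -
    have "(\<Prod>j<k. real q ^ (j + 1) - 1) = (\<Prod>j<k. real q ^ ((k - Suc j) + 1) - 1)"
      by (rule prod.nat_diff_reindex[symmetric])
    also have "\<dots> = (\<Prod>l<k. real q ^ (k - l) - 1)"
      by (rule prod.cong) (auto simp: Suc_diff_Suc)
    finally show ?thesis by simp
  qed
  have "(\<Prod>l<k. real q ^ l) \<noteq> 0" using q by simp
  then show ?thesis unfolding n d r qbinom_def using q by simp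
qed


lemma card_grass:
  fixes W :: "('a::{finite,field} ^ 'n) set"
  assumes W: "vec.subspace W" "vec.dim W = i" and ki: "k \<le> i"
  shows "real (card (grass W k)) = qbinom CARD('a) i k"
proof -
  have "real (\<Prod>l<k. CARD('a) ^ i - CARD('a) ^ l) =
        real (card (grass W k)) * real (\<Prod>l<k. CARD('a) ^ k - CARD('a) ^ l)"
    using card_grass_mult[OF W(1), of k] card_ilists[OF W(1), of k] W(2)
    by (metis of_nat_mult)
  then have "real (card (grass W k)) = real (\<Prod>l<k. CARD('a) ^ i - CARD('a) ^ l) /
       real (\<Prod>l<k. CARD('a) ^ k - CARD('a) ^ l)"
  proof -
    have "real (\<Prod>l<k. CARD('a) ^ k - CARD('a) ^ l) \<noteq> 0"
      using prod_pos[where 'a='a and k=k] by linarith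
    then show ?thesis using \<open>real _ = _\<close> by simp
  qed
  then show ?thesis using qbinom_alg[OF card_ge2 ki] by simp
qed

abbreviation acos_set :: "('a::field ^ 'n) \<Rightarrow> ('a ^ 'n) set \<Rightarrow> ('a ^ 'n) set" where
  "acos_set u U \<equiv> (\<lambda>w. u + w) ` U"

lemma cos_self: "vec.subspace U \<Longrightarrow> u \<in> acos_set u U"
  using vec.subspace_0 by force

lemma cos_sub_dir:
  assumes U: "vec.subspace U" and U': "vec.subspace U'" and s: "acos_set b U' \<subseteq> acos_set a U"
  shows "U' \<subseteq> U"
proof
  fix x assume x: "x \<in> U'"
  have "b \<in> acos_set a U" using s cos_self[OF U'] by blast
  then obtain y where y: "y \<in> U" "b = a + y" by blast
  have "b + x \<in> acos_set a U" using s x by blast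
  then obtain z where z: "z \<in> U" "b + x = a + z" by blast
  have "x = z - y" using y z by (simp add: algebra_simps)
  then show "x \<in> U" using y z U by (simp add: vec.subspace_diff)
qed

lemma cos_dir_eq:
  assumes "vec.subspace U" "vec.subspace U'" "acos_set b U' = acos_set a U"
  shows "U' = U"
  using cos_sub_dir[OF assms(1,2)] cos_sub_dir[OF assms(2,1)] assms(3) by blast

lemma cos_disj:
  assumes U: "vec.subspace U" and ne: "acos_set a U \<inter> acos_set b U \<noteq> {}"
  shows "acos_set a U = acos_set b U"
proof -
  obtain x y where xy: "x \<in> U" "y \<in> U" "a + x = b + y" using ne by blast
  have "acos_set a U \<subseteq> acos_set b U" if "x \<in> U" "y \<in> U" "a + x = b + y" for a b x y
  proof
    fix t assume "t \<in> acos_set a U"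
    then obtain z where z: "z \<in> U" "t = a + z" by blast
    have "t = b + (y - x + z)" using z that by (simp add: algebra_simps)
    moreover have "y - x + z \<in> U" using that z U by (simp add: vec.subspace_diff vec.subspace_add)
    ultimately show "t \<in> acos_set b U" by blast
  qed
  then show ?thesis using xy by (metis subset_antisym)
qed

lemma aff_cos: "vec.subspace U \<Longrightarrow> vec.dim U = k \<Longrightarrow> aff_space k (acos_set u U)"
  unfolding aff_space_def by blast

lemma aff_nonempty: "aff_space k A \<Longrightarrow> A \<noteq> {}"
  unfolding aff_space_def using vec.subspace_0 by blast


theorem theorem3p8:
  fixes L :: "('a::{finite,field} ^ 'n) set set"
    and T :: "('a ^ 'n) set"
    and k i x :: nat
  assumes "1 \<le> k" and "k \<le> CARD('n) - 1"
    and "L \<subseteq> kspaces_in k (UNIV :: ('a ^ 'n) set)"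
    and "real (card L) = real x * qbinom CARD('a) CARD('n) k"
    and hx: "\<And>S. is_spread k (UNIV :: ('a ^ 'n) set) S \<Longrightarrow> card (L \<inter> S) = x"
    and "aff_space i T"
    and "i \<ge> max (k + 1) 3"
    and hS: "is_spread k T S"
  shows "real (card ((L \<inter> kspaces_in k T) \<inter> S))
           = real (card (L \<inter> kspaces_in k T)) / qbinom CARD('a) i k"
proof -
  obtain v W where W: "vec.subspace W" "vec.dim W = i" and Tdef: "T = acos_set v W"
    using assms(6) unfolding aff_space_def by blast
  have ki: "k \<le> i" using assms(7) by simp
  have T1: "t + w \<in> T" if tw: "t \<in> T" "w \<in> W" for t w
  proof -
    obtain w0 where "w0 \<in> W" "t = v + w0" using tw Tdef by blast
    then have "t + w = v + (w0 + w)" "w0 + w \<in> W" using tw W vec.subspace_add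
      by (auto simp: algebra_simps)
    then show ?thesis using Tdef by blast
  qed
  have T2: "t' - t \<in> W" if tt: "t \<in> T" "t' \<in> T" for t t'
  proof -
    obtain w0 w1 where "w0 \<in> W" "t = v + w0" "w1 \<in> W" "t' = v + w1" using tt Tdef by blast
    then show ?thesis using W vec.subspace_diff by (auto simp: algebra_simps)
  qed
  define P where "P U = {acos_set u U | u. u \<in> T}" for U
  define R where "R U = {acos_set u U | u. u \<notin> T}" for U
  have gW: "vec.subspace U" "vec.dim U = k" "U \<subseteq> W" if "U \<in> grass W k" for U
    using that by (auto simp: grass_def)
  have cosT: "acos_set u U \<subseteq> T" if "U \<in> grass W k" "u \<in> T" for u U
    using T1 gW[OF that(1)] that by blast
  have spreadP: "is_spread k T (P U)" if U: "U \<in> grass W k" for U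
    unfolding is_spread_def
  proof (intro conjI)
    show "P U \<subseteq> kspaces_in k T"
      using cosT[OF U] aff_cos[OF gW(1,2)[OF U]] by (auto simp: P_def kspaces_in_def)
    show "\<forall>A\<in>P U. \<forall>B\<in>P U. A \<noteq> B \<longrightarrow> A \<inter> B = {}"
      using cos_disj[OF gW(1)[OF U]] by (auto simp: P_def)
    show "\<Union> (P U) = T"
      using cosT[OF U] cos_self[OF gW(1)[OF U]] by (auto simp: P_def)
  qed
  have Rdisj: "A \<inter> T = {}" if U: "U \<in> grass W k" and A: "A \<in> R U" for U A
  proof -
    obtain u where u: "u \<notin> T" "A = acos_set u U" using A by (auto simp: R_def)
    have "False" if "u + y \<in> T" "y \<in> U" for y
    proof -
      have "(u + y) + (- y) \<in> T"
        using T1[OF that(1)] that(2) gW(3)[OF U] W(1) vec.subspace_neg by blast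
      then show False using u by simp
    qed
    then show ?thesis using u by blast
  qed
  have ext: "is_spread k UNIV (S' \<union> R U) \<and> S' \<inter> R U = {}"
    if U: "U \<in> grass W k" and S': "is_spread k T S'" for U S'
  proof -
    have S'k: "S' \<subseteq> kspaces_in k T" and S'd: "\<forall>A\<in>S'. \<forall>B\<in>S'. A \<noteq> B \<longrightarrow> A \<inter> B = {}"
      and S'u: "\<Union>S' = T" using S' by (auto simp: is_spread_def)
    have Rk: "R U \<subseteq> kspaces_in k UNIV"
      using aff_cos[OF gW(1,2)[OF U]] by (auto simp: R_def kspaces_in_def)
    have Rd: "\<forall>A\<in>R U. \<forall>B\<in>R U. A \<noteq> B \<longrightarrow> A \<inter> B = {}"
      using cos_disj[OF gW(1)[OF U]] by (auto simp: R_def)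
    have Ru: "\<Union>(R U) = - T"
      using Rdisj[OF U] cos_self[OF gW(1)[OF U]] by (auto simp: R_def)
    have SR: "A \<inter> B = {}" if "A \<in> S'" "B \<in> R U" for A B
      using that S'u Rdisj[OF U] by blast
    have "S' \<inter> R U = {}"
    proof (rule ccontr)
      assume "S' \<inter> R U \<noteq> {}"
      then obtain A where A: "A \<in> S'" "A \<in> R U" by blast
      then have "A \<noteq> {}" using S'k aff_nonempty by (auto simp: kspaces_in_def)
      then show False using SR[OF A] by blast
    qed
    moreover have "is_spread k UNIV (S' \<union> R U)"
      unfolding is_spread_def
    proof (intro conjI)
      show "S' \<union> R U \<subseteq> kspaces_in k UNIV" using S'k Rk by (auto simp: kspaces_in_def)
      show "\<forall>A\<in>S' \<union> R U. \<forall>B\<in>S' \<union> R U. A \<noteq> B \<longrightarrow> A \<inter> B = {}"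
        using S'd Rd SR by blast
      show "\<Union> (S' \<union> R U) = UNIV" using S'u Ru by auto
    qed
    ultimately show ?thesis by blast
  qed
  have cardSR: "card (L \<inter> S') + card (L \<inter> R U) = x"
    if U: "U \<in> grass W k" and S': "is_spread k T S'" for U S'
  proof -
    have "card (L \<inter> (S' \<union> R U)) = x" using hx ext[OF U S'] by blast
    moreover have "L \<inter> (S' \<union> R U) = (L \<inter> S') \<union> (L \<inter> R U)" by blast
    moreover have "(L \<inter> S') \<inter> (L \<inter> R U) = {}" using ext[OF U S'] by blast
    ultimately show ?thesis by (simp add: card_Un_disjoint)
  qed
  have gq: "real (card (grass W k)) = qbinom CARD('a) i k" using card_grass[OF W ki] .
  have gpos: "qbinom CARD('a) i k > 0"
  proof -
    have "real (card (grass W k)) * real (\<Prod>l<k. CARD('a) ^ k - CARD('a) ^ l) > 0"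
    proof -
      have "card (ilists W k) > 0"
      proof -
        have "CARD('a) ^ l < CARD('a) ^ i" if "l < k" for l
          using card_ge2[where 'a='a] that ki by (intro power_strict_increasing) auto
        then show ?thesis using card_ilists[OF W(1), of k] W(2) by (auto intro: prod_pos)
      qed
      then show ?thesis using card_grass_mult[OF W(1), of k] by (metis of_nat_0_less_iff of_nat_mult)
    qed
    then have "real (card (grass W k)) > 0" by (simp add: zero_less_mult_iff)
    then show ?thesis using gq by simp
  qed
  have "grass W k \<noteq> {}" using gpos gq by auto
  then obtain U0 where U0: "U0 \<in> grass W k" by blast
  have const: "card (L \<inter> S') = card (L \<inter> S)" if "is_spread k T S'" for S'
    using cardSR[OF U0 that] cardSR[OF U0 hS] by simp
  have part: "L \<inter> kspaces_in k T = (\<Union>U\<in>grass W k. L \<inter> P U)"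
  proof safe
    fix A assume AL: "A \<in> L" and A: "A \<in> kspaces_in k T"
    then obtain a U' where U': "vec.subspace U'" "vec.dim U' = k" "A = acos_set a U'" "A \<subseteq> T"
      by (auto simp: kspaces_in_def aff_space_def)
    have aT: "a \<in> T" using U' cos_self[OF U'(1)] by blast
    have "U' \<subseteq> W"
    proof
      fix y assume "y \<in> U'"
      then have "a + y \<in> T" using U' by blast
      then have "(a + y) - a \<in> W" using T2[OF aT] by blast
      then show "y \<in> W" by simp
    qed
    then have "U' \<in> grass W k" using U' by (auto simp: grass_def)
    moreover have "A \<in> P U'" using U' aT by (auto simp: P_def)
    ultimately show "A \<in> (\<Union>U\<in>grass W k. L \<inter> P U)" using AL by blast
  next
    fix U A assume "U \<in> grass W k" "A \<in> P U"
    then show "A \<in> kspaces_in k T" using spreadP by (auto simp: is_spread_def)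
  qed
  have "card (L \<inter> kspaces_in k T) = (\<Sum>U\<in>grass W k. card (L \<inter> P U))"
    unfolding part
  proof (rule card_UN_disjoint)
    show "finite (grass W k)" by simp
    show "\<forall>U\<in>grass W k. finite (L \<inter> P U)" by simp
    show "\<forall>U\<in>grass W k. \<forall>U'\<in>grass W k. U \<noteq> U' \<longrightarrow> L \<inter> P U \<inter> (L \<inter> P U') = {}"
    proof (intro ballI impI)
      fix U U' assume U: "U \<in> grass W k" and U': "U' \<in> grass W k" and ne: "U \<noteq> U'"
      show "L \<inter> P U \<inter> (L \<inter> P U') = {}"
      proof (rule ccontr)
        assume "L \<inter> P U \<inter> (L \<inter> P U') \<noteq> {}"
        then obtain u u' where "acos_set u U = acos_set u' U'" by (auto simp: P_def)
        then have "U = U'" using cos_dir_eq[OF gW(1)[OF U'] gW(1)[OF U]] by blast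
        then show False using ne by simp
      qed
    qed
  qed
  also have "\<dots> = card (grass W k) * card (L \<inter> S)"
    using const spreadP by simp
  finally have cT: "card (L \<inter> kspaces_in k T) = card (grass W k) * card (L \<inter> S)" .
  have "(L \<inter> kspaces_in k T) \<inter> S = L \<inter> S" using hS by (auto simp: is_spread_def)
  then show ?thesis using cT gq gpos by simp
qed

end
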